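(* For each $x\in\{1,2,3,4\}$, a minimal-ABC tree does not contain a $D_{z,x}^4$-branch with $z\ge 216$.
   Context: All graphs are finite trees; $d(u)$ denotes the degree of a vertex $u$. The atom-bond connectivity index is $\mathrm{ABC}(G)=\sum_{uv\in E(G)}\sqrt{\frac{d(u)+d(v)-2}{d(u)d(v)}}$. A minimal-ABC tree is a tree whose ABC index is minimum among all trees with the same number of vertices. A vertex is big if its degree is at least $3$ and none of its neighbors has degree $2$. A minimal-ABC tree is regarded as a rooted tree whose root vertex is the center of the subgraph induced by its big vertices (this subgraph is a star); "children" refers to this rooting, and a branch with center $w$ means $w$ together with all its descendants. For $k\ge 2$, a $B_k$-branch is a center vertex of degree $k+1$ whose $k$ children each have degree $2$ and each has exactly one child, which is a leaf. For $x\in\{1,2,3,4\}$, a $D_{z,x}^4$-branch is a center vertex of degree $z+1$ whose $z$ children are the centers of $z-x$ $B_3$-branches and $x$ $B_4$-branches. *)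

theory Defs
  imports Complex_Main
begin

definition adj_rel :: "'a set set \<Rightarrow> ('a \<times> 'a) set" where
  "adj_rel E = {(u, v). {u, v} \<in> E}"

definition is_tree :: "'a set \<Rightarrow> 'a set set \<Rightarrow> bool" where
  "is_tree V E \<longleftrightarrow> finite V \<and> V \<noteq> {} \<and>
     (\<forall>e\<in>E. \<exists>u v. e = {u, v} \<and> u \<in> V \<and> v \<in> V \<and> u \<noteq> v) \<and>
     (\<forall>u\<in>V. \<forall>v\<in>V. (u, v) \<in> (adj_rel E)\<^sup>*) \<and>
     card E + 1 = card V"

definition deg :: "'a set set \<Rightarrow> 'a \<Rightarrow> nat" where
  "deg E u = card {v. {u, v} \<in> E}"

definition ABC :: "'a set set \<Rightarrow> real" where
  "ABC E = (\<Sum>e\<in>E. sqrt (((\<Sum>x\<in>e. real (deg E x)) - 2) / (\<Prod>x\<in>e. real (deg E x))))"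

text \<open>Minimal-ABC tree: ABC index minimal among all trees with the same number
  of vertices (every finite tree is isomorphic to one with vertices in nat).\<close>
definition minimal_ABC :: "'a set \<Rightarrow> 'a set set \<Rightarrow> bool" where
  "minimal_ABC V E \<longleftrightarrow> is_tree V E \<and>
     (\<forall>(V' :: nat set) E'. is_tree V' E' \<and> card V' = card V \<longrightarrow> ABC E \<le> ABC E')"

definition big_vertices :: "'a set \<Rightarrow> 'a set set \<Rightarrow> 'a set" where
  "big_vertices V E = {u \<in> V. deg E u \<ge> 3 \<and> (\<forall>v. {u, v} \<in> E \<longrightarrow> deg E v \<noteq> 2)}"

definition induced_edges :: "'a set set \<Rightarrow> 'a set \<Rightarrow> 'a set set" where
  "induced_edges E S = {e \<in> E. e \<subseteq> S}"

text \<open>c is a center of the star with vertex set S and edge set F: c is adjacent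
  to every other vertex (for a single edge both endpoints qualify).\<close>
definition star_center :: "'a set \<Rightarrow> 'a set set \<Rightarrow> 'a \<Rightarrow> bool" where
  "star_center S F c \<longleftrightarrow> c \<in> S \<and> (\<forall>b\<in>S - {c}. {c, b} \<in> F)"

definition is_root :: "'a set \<Rightarrow> 'a set set \<Rightarrow> 'a \<Rightarrow> bool" where
  "is_root V E r \<longleftrightarrow> star_center (big_vertices V E) (induced_edges E (big_vertices V E)) r"

definition child :: "'a set set \<Rightarrow> 'a \<Rightarrow> 'a \<Rightarrow> 'a \<Rightarrow> bool" where
  "child E r w v \<longleftrightarrow> {w, v} \<in> E \<and> (r, w) \<in> (adj_rel (E - {{w, v}}))\<^sup>*"

definition children :: "'a set set \<Rightarrow> 'a \<Rightarrow> 'a \<Rightarrow> 'a set" where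
  "children E r w = {v. child E r w v}"

definition is_B_branch :: "'a set set \<Rightarrow> 'a \<Rightarrow> nat \<Rightarrow> 'a \<Rightarrow> bool" where
  "is_B_branch E r k c \<longleftrightarrow> 2 \<le> k \<and> deg E c = k + 1 \<and> card (children E r c) = k \<and>
     (\<forall>v\<in>children E r c. deg E v = 2 \<and> card (children E r v) = 1 \<and>
        (\<forall>u\<in>children E r v. deg E u = 1))"

definition is_D4_branch :: "'a set set \<Rightarrow> 'a \<Rightarrow> nat \<Rightarrow> nat \<Rightarrow> 'a \<Rightarrow> bool" where
  "is_D4_branch E r z x w \<longleftrightarrow> x \<le> z \<and> deg E w = z + 1 \<and> card (children E r w) = z \<and>
     (\<forall>v\<in>children E r w. is_B_branch E r 3 v \<or> is_B_branch E r 4 v) \<and>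
     card {v \<in> children E r w. is_B_branch E r 3 v} = z - x \<and>
     card {v \<in> children E r w. is_B_branch E r 4 v} = x"

end

theory Submission
  imports Defs
begin

definition fw :: "real \<Rightarrow> real \<Rightarrow> real" where
  "fw p q = sqrt ((p + q - 2) / (p * q))"

lemma fw_sq: "p > 0 \<Longrightarrow> q > 0 \<Longrightarrow> p + q \<ge> 2 \<Longrightarrow> (fw p q)^2 = 1/p + 1/q - 2/(p*q)"
  unfolding fw_def by (simp add: field_simps)

lemma fw_ge: assumes "s \<ge> 2" "b \<ge> 1" shows "fw s b \<ge> 1 / sqrt s"
proof -
  have "(1/sqrt s)^2 \<le> (s + b - 2) / (s * b)"
    using assms by (simp add: power_divide field_simps)
  then show ?thesis unfolding fw_def by (simp add: real_le_rsqrt)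
qed

lemma P1: assumes "2 \<le> s" "s \<le> a" "b \<ge> 1"
  shows "fw s b - fw a b \<le> 1/sqrt s - 1/sqrt a"
proof -
  define F1 where "F1 = fw s b"
  define F2 where "F2 = fw a b"
  have g1: "F1 \<ge> 1/sqrt s" using fw_ge assms unfolding F1_def by simp
  have g2: "F2 \<ge> 1/sqrt a" using fw_ge assms unfolding F2_def by simp
  have sq1: "F1^2 = 1/s + 1/b - 2/(s*b)" unfolding F1_def using assms by (intro fw_sq) auto
  have sq2: "F2^2 = 1/a + 1/b - 2/(a*b)" unfolding F2_def using assms by (intro fw_sq) auto
  have nz: "s \<noteq> 0" "a \<noteq> 0" "b \<noteq> 0" using assms by auto
  have "F1^2 - F2^2 = (1/s - 1/a) * (1 - 2/b)" unfolding sq1 sq2 using nz by (simp add: field_simps)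
  also have "\<dots> \<le> (1/s - 1/a)"
  proof -
    have "1/s - 1/a \<ge> 0" using assms by (simp add: frac_le)
    moreover have "1 - 2/b \<le> 1" using assms by simp
    ultimately show ?thesis by (simp add: mult_left_le)
  qed
  finally have d: "F1^2 - F2^2 \<le> 1/s - 1/a" .
  have ss: "1/s - 1/a = (1/sqrt s - 1/sqrt a) * (1/sqrt s + 1/sqrt a)"
    using assms by (simp add: algebra_simps power2_eq_square[symmetric] power_divide)
  show ?thesis
  proof (cases "F1 \<le> F2")
    case True
    have "1/sqrt a \<le> 1/sqrt s" using assms by (simp add: frac_le)
    then show ?thesis using True unfolding F1_def F2_def by simp
  next
    case False
    have pos: "F1 + F2 > 0" using g1 g2 assms
      by (smt (verit) divide_pos_pos real_sqrt_gt_zero)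
    have "(F1 - F2) * (F1 + F2) = F1^2 - F2^2" by (simp add: algebra_simps power2_eq_square)
    also have "\<dots> \<le> (1/sqrt s - 1/sqrt a) * (1/sqrt s + 1/sqrt a)" using d ss by simp
    also have "\<dots> \<le> (1/sqrt s - 1/sqrt a) * (F1 + F2)"
    proof (rule mult_left_mono)
      show "1/sqrt s + 1/sqrt a \<le> F1 + F2" using g1 g2 by simp
      show "0 \<le> 1/sqrt s - 1/sqrt a" using assms by (simp add: frac_le)
    qed
    finally have "(F1 - F2) * (F1 + F2) \<le> (1/sqrt s - 1/sqrt a) * (F1 + F2)" .
    then have "F1 - F2 \<le> 1/sqrt s - 1/sqrt a" using pos by (simp add: mult_le_cancel_right)
    then show ?thesis unfolding F1_def F2_def .
  qed
qed

lemma fw4: "t > 0 \<Longrightarrow> fw t 4 = sqrt (1/4 + 1/(2*t))"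
  unfolding fw_def by (simp add: field_simps)
lemma fw5: "t > 0 \<Longrightarrow> fw t 5 = sqrt (1/5 + 3/(5*t))"
  unfolding fw_def by (simp add: field_simps)
lemma fw55: "t > 0 \<Longrightarrow> fw t 55 = sqrt (1/55 + 53/(55*t))"
  unfolding fw_def by (simp add: field_simps)

lemma diff_le_sq: fixes F1 F2 k :: real
  assumes "0 \<le> F2" "F2 \<le> F1" "k > 0" "k \<le> F1 + F2"
  shows "F1 - F2 \<le> (F1^2 - F2^2) / k"
proof -
  have "(F1 - F2) * k \<le> (F1 - F2) * (F1 + F2)"
    using assms by (intro mult_left_mono) auto
  also have "\<dots> = F1^2 - F2^2" by (simp add: algebra_simps power2_eq_square)
  finally show ?thesis using assms by (simp add: pos_le_divide_eq)
qed

lemma P2: fixes s :: real assumes "s \<ge> 111"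
  shows "1/sqrt s - 1/sqrt (s+106) \<le> 273/10000"
proof -
  define p where "p = sqrt s"
  define q where "q = sqrt (s+106)"
  have p: "p \<ge> 10.5" unfolding p_def using assms by (intro real_le_rsqrt) (simp add: power2_eq_square)
  have q: "q \<ge> 14.7" unfolding q_def using assms by (intro real_le_rsqrt) (simp add: power2_eq_square)
  have pp: "p^2 = s" unfolding p_def using assms by simp
  have qq: "q^2 = s + 106" unfolding q_def using assms by simp
  have "(q - p) * (q + p) = 106" using pp qq by (simp add: algebra_simps power2_eq_square)
  then have qp: "q - p = 106 / (q + p)" using p q by (simp add: eq_divide_eq)
  have "q - p \<le> 106 / 25.2" unfolding qp using p q by (intro divide_left_mono) auto
  moreover have "p * q \<ge> 10.5 * 14.7" using p q by (intro mult_mono) auto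
  ultimately have "(q - p) / (p * q) \<le> (106 / 25.2) / (10.5 * 14.7)"
    using p q by (intro frac_le) auto
  also have "\<dots> \<le> 273/10000" by simp
  finally have "(q - p) / (p * q) \<le> 273/10000" .
  moreover have "1/p - 1/q = (q - p) / (p * q)" using p q by (simp add: field_simps)
  ultimately show ?thesis unfolding p_def q_def by simp
qed

lemma numeric:
  fixes z x b :: real
  assumes z: "z \<ge> 216" and x: "1 \<le> x" "x \<le> 4" and b: "b \<ge> 1"
  shows "(z-x-108)*(fw (z+1) 4 - fw (z-105) 4) + (x-1)*(fw (z+1) 5 - fw (z-105) 5)
     + (fw (z+1) 5 - fw (z-105) 4) + (fw (z+1) b - fw (z-105) b) + 2*sqrt(1/2)
     + 108*fw (z+1) 4 - 2*fw (z-105) 55 - 108*fw 55 4 > 0"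
proof -
  define s where "s = z - 105"
  define a where "a = z + 1"
  have s: "s \<ge> 111" unfolding s_def using z by simp
  have as: "a = s + 106" unfolding s_def a_def by simp
  define S4 where "S4 = fw s 4"
  define A4 where "A4 = fw a 4"
  define S5 where "S5 = fw s 5"
  define A5 where "A5 = fw a 5"
  have S4: "S4 = sqrt (1/4 + 1/(2*s))" unfolding S4_def using s by (simp add: fw4)
  have A4: "A4 = sqrt (1/4 + 1/(2*a))" unfolding A4_def using s as by (simp add: fw4)
  have S5: "S5 = sqrt (1/5 + 3/(5*s))" unfolding S5_def using s by (simp add: fw5)
  have A5: "A5 = sqrt (1/5 + 3/(5*a))" unfolding A5_def using s as by (simp add: fw5)
  have A4h: "A4 \<ge> 1/2" unfolding A4 using s as by (intro real_le_rsqrt) (simp add: power2_eq_square)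
  have S4h: "S4 \<ge> 1/2" unfolding S4 using s by (intro real_le_rsqrt) (simp add: power2_eq_square)
  have A4S4: "A4 \<le> S4" unfolding A4 S4 using s as
    by (intro real_sqrt_le_mono add_left_mono divide_left_mono) auto
  have A5S5: "A5 \<le> S5" unfolding A5 S5 using s as
    by (intro real_sqrt_le_mono add_left_mono divide_left_mono) auto
  have A5p: "A5 \<ge> 44/100" unfolding A5 using s as by (intro real_le_rsqrt) (simp add: power2_eq_square)
  have S5p: "S5 \<ge> 4472/10000" unfolding S5 using s as by (intro real_le_rsqrt) (simp add: power2_eq_square)
  have P3: "S4 - A4 \<le> 53 / (s * a)"
  proof -
    have "S4 - A4 \<le> (S4^2 - A4^2) / 1"
      using A4h S4h A4S4 by (intro diff_le_sq) auto
    also have "S4^2 - A4^2 = 1/(2*s) - 1/(2*a)" unfolding S4 A4 using s as by simp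
    also have "\<dots> = (a - s) / (2 * s * a)" using s as by (simp add: field_simps)
    also have "\<dots> = 53 / (s * a)" using as by simp
    finally show ?thesis by simp
  qed
  have zS: "z * (S4 - A4) \<le> 53 / s"
  proof -
    have "z * (S4 - A4) \<le> a * (53 / (s * a))"
      using P3 A4S4 z unfolding a_def by (intro mult_mono) auto
    also have "\<dots> = 53 / s"
    proof -
      have "a \<noteq> 0" using s as by simp
      then show ?thesis by simp
    qed
    finally show ?thesis .
  qed
  have P4: "107 * S4 \<ge> 107/2 + 53 / s"
  proof -
    have "S4 \<ge> (1/2) * (1 + 995/1000 / s)" unfolding S4
    proof (intro real_le_rsqrt)
      have "((1/2) * (1 + 995/1000 / s))^2 = 1/4 + 995/1000/(2*s) + 990025/1000000/(4*s^2)"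
        using s by (simp add: field_simps power2_eq_square)
      also have "\<dots> \<le> 1/4 + 1/(2*s)"
      proof -
        have "990025/1000000/(4*s^2) \<le> 5/1000/(2*s)" using s by (simp add: field_simps power2_eq_square)
        then show ?thesis by (simp add: field_simps)
      qed
      finally show "((1/2) * (1 + 995/1000 / s))^2 \<le> 1/4 + 1/(2*s)" .
    qed
    then have "107 * S4 \<ge> 107 * ((1/2) * (1 + 995/1000 / s))" by simp
    moreover have "107 * ((1/2) * (1 + 995/1000 / s)) \<ge> 107/2 + 53 / s" using s by (simp add: field_simps)
    ultimately show ?thesis by linarith
  qed
  have P5: "S5 - A5 \<le> 31/10000"
  proof -
    have "S5 - A5 \<le> (S5^2 - A5^2) / 0.88"
      using A5p S5p A5S5 by (intro diff_le_sq) auto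
    also have "S5^2 - A5^2 = 3/(5*s) - 3/(5*a)" unfolding S5 A5 using s as by simp
    also have "\<dots> = 3 * (a - s) / (5 * s * a)" using s as by (simp add: field_simps)
    also have "\<dots> = 318 / (5 * s * a)" using as by simp
    also have "318 / (5 * s * a) \<le> 318 / (5 * 111 * 217)" using s as
      by (intro divide_left_mono mult_mono) auto
    finally show ?thesis by simp
  qed
  have P6: "fw s 55 \<le> 164/1000"
  proof -
    have "fw s 55 = sqrt (1/55 + 53/(55*s))" using s by (simp add: fw55)
    also have "\<dots> \<le> sqrt ((164/1000)^2)"
    proof (intro real_sqrt_le_mono)
      have h: "53/(55*s) \<le> 53/6105" using s by (intro divide_left_mono) auto
      have h2: "1/55 + 53/6105 \<le> (164/1000::real)^2" by (simp add: power2_eq_square)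
      show "1/55 + 53/(55*s) \<le> (164/1000)^2" using h h2 by linarith
    qed
    finally show ?thesis by simp
  qed
  have P7: "fw 55 4 \<le> 50902/100000"
  proof -
    have "fw 55 4 = sqrt (57/220)" unfolding fw_def by simp
    also have "\<dots> \<le> sqrt ((50902/100000)^2)" by (intro real_sqrt_le_mono) (simp add: power2_eq_square)
    finally show ?thesis by simp
  qed
  have P8: "sqrt (1/2) \<ge> 707105/1000000" by (intro real_le_rsqrt) (simp add: power2_eq_square)
  have P1': "fw a b - fw s b \<ge> -(1/sqrt s - 1/sqrt a)"
    using P1[of s a b] s as b by simp
  have P2': "1/sqrt s - 1/sqrt a \<le> 273/10000" using P2[OF s] as by simp
  have e1: "(z-x-108)*(A4 - S4) + (A5 - S4) + 108 * A4 + (x-1)*(A5 - S5)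
      = 107 * S4 - (z-x)*(S4 - A4) + S5 - x * (S5 - A5)"
    by (simp add: algebra_simps)
  have e2: "(z-x)*(S4 - A4) \<le> z * (S4 - A4)" using A4S4 x by (intro mult_right_mono) auto
  have e3: "x * (S5 - A5) \<le> 4 * (31/10000)" using A5S5 x P5 by (intro mult_mono) auto
  have "(z-x-108)*(A4 - S4) + (x-1)*(A5 - S5) + (A5 - S4) + (fw a b - fw s b) + 2*sqrt(1/2)
     + 108*A4 - 2*fw s 55 - 108*fw 55 4 > 0"
    using e1 e2 e3 zS P4 S5p P6 P7 P8 P1' P2' by linarith
  then show ?thesis unfolding S4_def A4_def S5_def A5_def s_def a_def by simp
qed

definition nb :: "'a set set \<Rightarrow> 'a \<Rightarrow> 'a set" where
  "nb E t = {s. {t, s} \<in> E}"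

definition ew :: "'a set set \<Rightarrow> 'a set \<Rightarrow> real" where
  "ew E e = sqrt (((\<Sum>x\<in>e. real (deg E x)) - 2) / (\<Prod>x\<in>e. real (deg E x)))"

lemma deg_nb: "deg E t = card (nb E t)" unfolding deg_def nb_def by simp

lemma ABC_ew: "ABC E = sum (ew E) E" unfolding ABC_def ew_def by simp

lemma ew_pair: "a \<noteq> b \<Longrightarrow> ew F {a, b} = fw (real (deg F a)) (real (deg F b))"
  unfolding ew_def fw_def by simp

lemma nb_sym: "s \<in> nb E t \<longleftrightarrow> t \<in> nb E s"
  unfolding nb_def by (simp add: insert_commute)

lemma tree_edge: assumes "is_tree V E" "{a, b} \<in> E" shows "a \<in> V \<and> b \<in> V \<and> a \<noteq> b"
proof -
  obtain u v where uv: "{a, b} = {u, v}" "u \<in> V" "v \<in> V" "u \<noteq> v"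
    using assms unfolding is_tree_def by blast
  then have "a \<in> {u, v}" "b \<in> {u, v}" by auto
  then have "a \<in> V" "b \<in> V" using uv by auto
  moreover have "a \<noteq> b"
  proof
    assume "a = b"
    then have "{u, v} = {a}" using uv by simp
    then show False using uv by (metis insert_absorb insert_iff singleton_insert_inj_eq')
  qed
  ultimately show ?thesis by simp
qed

lemma tree_finE: "is_tree V E \<Longrightarrow> finite E"
proof -
  assume t: "is_tree V E"
  have "E \<subseteq> Pow V"
  proof
    fix e assume "e \<in> E"
    then obtain a b where "e = {a, b}" "a \<in> V" "b \<in> V" using t unfolding is_tree_def by meson
    then show "e \<in> Pow V" by auto
  qed
  moreover have "finite V" using t unfolding is_tree_def by blast
  ultimately show ?thesis by (meson finite_Pow_iff finite_subset)
qed

lemma tree_nb_sub: "is_tree V E \<Longrightarrow> nb E t \<subseteq> V"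
  unfolding nb_def using tree_edge by fastforce

lemma tree_nb_fin: "is_tree V E \<Longrightarrow> finite (nb E t)"
  using tree_nb_sub unfolding is_tree_def by (meson finite_subset)

lemma adj_sym: "(a, b) \<in> (adj_rel F)\<^sup>* \<Longrightarrow> (b, a) \<in> (adj_rel F)\<^sup>*"
proof -
  have "(adj_rel F)\<inverse> = adj_rel F" unfolding adj_rel_def by (auto simp: insert_commute)
  moreover assume "(a, b) \<in> (adj_rel F)\<^sup>*"
  ultimately show ?thesis by (metis rtrancl_converseI)
qed

lemma adj_edge: "{a, b} \<in> F \<Longrightarrow> (a, b) \<in> (adj_rel F)\<^sup>*"
  unfolding adj_rel_def by auto

lemma fw2: "p > 0 \<Longrightarrow> fw p 2 = sqrt (1/2)"
  unfolding fw_def by simp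

lemma pair_img: "{a, b} \<in> (\<lambda>y. {t, y}) ` S \<longleftrightarrow> (a = t \<and> b \<in> S) \<or> (b = t \<and> a \<in> S)"
  by (auto simp: doubleton_eq_iff)

lemma inj_pair: "inj_on (\<lambda>y. {t, y}) S"
  by (auto simp: inj_on_def doubleton_eq_iff)

lemma transform:
  fixes V :: "'a set" and E :: "'a set set"
  assumes tree: "is_tree V E" and wV: "w \<in> V"
    and Nw: "nb E w = Ch \<union> {p}" and pCh: "p \<notin> Ch"
    and Ch: "Ch = Ch3 \<union> Ch4" "Ch3 \<inter> Ch4 = {}" "card Ch3 = z - x" "card Ch4 = x"
    and d3: "\<forall>y\<in>Ch3. deg E y = 4" and d4: "\<forall>y\<in>Ch4. deg E y = 5"
    and cCh4: "c \<in> Ch4"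
    and M: "M1 \<subseteq> Ch3" "M2 \<subseteq> Ch3" "M1 \<inter> M2 = {}" "card M1 = 54" "card M2 = 54"
    and Nc: "nb E c = Cc \<union> {w}" and dCc: "\<forall>t\<in>Cc. deg E t = 2" and vCc: "v \<in> Cc"
    and Nv: "nb E v = {c, u}" and Nu: "nb E u = {v}"
    and z: "z \<ge> 216" "1 \<le> x" "x \<le> 4"
  shows "\<exists>E'. is_tree V E' \<and> ABC E' < ABC E"
proof -
  define M where "M = M1 \<union> M2"
  define R where "R = {{c, v}, {v, u}} \<union> (\<lambda>y. {w, y}) ` M"
  define A where "A = {{w, v}, {w, u}} \<union> (\<lambda>y. {v, y}) ` M1 \<union> (\<lambda>y. {u, y}) ` M2"
  define E' where "E' = (E - R) \<union> A"
  have finE: "finite E" using tree_finE[OF tree] .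
  have finN: "\<And>t. finite (nb E t)" using tree_nb_fin[OF tree] .
  have finCh: "finite Ch" using finN[of w] Nw by (metis finite_Un)
  have fin3: "finite Ch3" "finite Ch4" using finCh Ch by auto
  have finM: "finite M1" "finite M2" "finite M" using M fin3 finite_subset unfolding M_def by auto
  have cardCh: "card Ch = z" using Ch fin3 z by (simp add: card_Un_disjoint)
  have dw: "deg E w = z + 1" unfolding deg_nb Nw using finCh pCh cardCh by simp
  have dc: "deg E c = 5" using d4 cCh4 by simp
  have dv: "deg E v = 2" using dCc vCc by simp
  have du: "deg E u = 1" unfolding deg_nb Nu by simp
  have dM: "\<forall>y\<in>M. deg E y = 4" using d3 M unfolding M_def by auto
  have MCh: "M \<subseteq> Ch" using M Ch unfolding M_def by auto
  have cardM: "card M = 108" unfolding M_def using M finM by (simp add: card_Un_disjoint)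
  have ne: "w \<noteq> c" "w \<noteq> v" "w \<noteq> u" "c \<noteq> v" "c \<noteq> u" "v \<noteq> u"
    using dw dc dv du z by auto
  have nM: "w \<notin> M" "c \<notin> M" "v \<notin> M" "u \<notin> M"
    using dw dc dv du dM z by fastforce+
  have wnv: "w \<notin> nb E v" "w \<notin> nb E u" using Nv Nu ne by auto
  have vnw: "v \<notin> nb E w" "u \<notin> nb E w" using wnv nb_sym by metis+
  have pw: "p \<in> nb E w" using Nw by simp
  have pne: "p \<noteq> w" "p \<noteq> c" "p \<noteq> v" "p \<noteq> u" "p \<notin> M"
  proof -
    show "p \<noteq> w" using pw tree_edge[OF tree, of w p] unfolding nb_def by auto
    show "p \<noteq> c" using pCh cCh4 Ch by auto
    show "p \<noteq> v" "p \<noteq> u" using pw vnw by auto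
    show "p \<notin> M" using pCh MCh by auto
  qed
  have Mw: "M \<subseteq> nb E w" using MCh Nw by auto
  have wMy: "\<And>y. y \<in> M \<Longrightarrow> w \<in> nb E y" proof -
    fix y assume "y \<in> M"
    then have "y \<in> nb E w" using Mw by auto
    then show "w \<in> nb E y" using nb_sym by metis
  qed
  have vMy: "\<And>y. y \<in> M \<Longrightarrow> v \<notin> nb E y \<and> u \<notin> nb E y"
  proof -
    fix y assume "y \<in> M"
    then have "y \<noteq> c" "y \<noteq> u" "y \<noteq> v" using nM by auto
    then show "v \<notin> nb E y \<and> u \<notin> nb E y" using Nv Nu nb_sym by (metis insert_iff empty_iff)
  qed
  have vnc: "v \<in> nb E c" using Nc vCc by simp
  have M12: "M1 \<subseteq> M" "M2 \<subseteq> M" unfolding M_def by auto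
  have memE': "\<And>a b. {a, b} \<in> E' \<longleftrightarrow> ({a, b} \<in> E \<and> {a, b} \<notin> R) \<or> {a, b} \<in> A"
    unfolding E'_def by auto
  have NW': "nb E' w = (nb E w - M) \<union> {v, u}"
    using ne nM vnw unfolding nb_def E'_def R_def A_def M_def
    by (auto simp: pair_img doubleton_eq_iff)
  have NC': "nb E' c = nb E c - {v}"
    using ne nM unfolding nb_def E'_def R_def A_def M_def
    by (auto simp: pair_img doubleton_eq_iff)
  have NV': "nb E' v = insert w M1"
    using ne nM M12 Mw Nv unfolding nb_def E'_def R_def A_def M_def
    by (auto simp: pair_img doubleton_eq_iff)
  have NU': "nb E' u = insert w M2"
    using ne nM M12 Mw Nu unfolding nb_def E'_def R_def A_def M_def
    by (auto simp: pair_img doubleton_eq_iff)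
  have NM1: "\<And>y. y \<in> M1 \<Longrightarrow> nb E' y = insert v (nb E y - {w})"
  proof -
    fix y assume y: "y \<in> M1"
    then have "y \<in> M" "y \<notin> M2" using M12 M(3) by auto
    then have "y \<noteq> w" "y \<noteq> c" "y \<noteq> v" "y \<noteq> u" using nM by auto
    then show "nb E' y = insert v (nb E y - {w})"
      using ne nM y \<open>y \<notin> M2\<close> unfolding nb_def E'_def R_def A_def M_def
      by (auto simp: pair_img doubleton_eq_iff)
  qed
  have NM2: "\<And>y. y \<in> M2 \<Longrightarrow> nb E' y = insert u (nb E y - {w})"
  proof -
    fix y assume y: "y \<in> M2"
    then have "y \<in> M" "y \<notin> M1" using M12 M(3) by auto
    then have "y \<noteq> w" "y \<noteq> c" "y \<noteq> v" "y \<noteq> u" using nM by auto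
    then show "nb E' y = insert u (nb E y - {w})"
      using ne nM y \<open>y \<notin> M1\<close> unfolding nb_def E'_def R_def A_def M_def
      by (auto simp: pair_img doubleton_eq_iff)
  qed
  have NO: "\<And>t. t \<notin> {w, c, v, u} \<Longrightarrow> t \<notin> M \<Longrightarrow> nb E' t = nb E t"
  proof -
    fix t assume t: "t \<notin> {w, c, v, u}" "t \<notin> M"
    then show "nb E' t = nb E t"
      unfolding nb_def E'_def R_def A_def M_def
      by (auto simp: pair_img doubleton_eq_iff)
  qed
  have dW': "deg E' w = z - 105"
  proof -
    have "card (nb E w - M) = z + 1 - 108" using Mw finM cardM dw unfolding deg_nb
      by (simp add: card_Diff_subset)
    moreover have "finite (nb E w - M)" using finN by simp
    ultimately show ?thesis unfolding deg_nb NW' using vnw ne z by (simp add: card_insert_if)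
  qed
  have dC': "deg E' c = 4" unfolding deg_nb NC' using vnc finN dc unfolding deg_nb by simp
  have wM12: "w \<notin> M1" "w \<notin> M2" using nM M12 by auto
  have dV': "deg E' v = 55" unfolding deg_nb NV' using finM M wM12 by simp
  have dU': "deg E' u = 55" unfolding deg_nb NU' using finM M wM12 by simp
  have dM': "\<And>y. y \<in> M \<Longrightarrow> deg E' y = deg E y"
  proof -
    fix y assume y: "y \<in> M"
    have fy: "finite (nb E y)" using finN by simp
    have wy: "w \<in> nb E y" using wMy y by simp
    have "card (nb E y - {w}) + 1 = card (nb E y)" using fy wy
      by (metis card_Diff1_less card.remove add.commute plus_1_eq_Suc)
    then show "deg E' y = deg E y"
    proof (cases "y \<in> M1")
      case True
      then show ?thesis unfolding deg_nb NM1[OF True] using vMy[OF y] fy \<open>card (nb E y - {w}) + 1 = card (nb E y)\<close> by simp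
    next
      case False
      then have "y \<in> M2" using y unfolding M_def by simp
      then show ?thesis unfolding deg_nb NM2[OF \<open>y \<in> M2\<close>] using vMy[OF y] fy \<open>card (nb E y - {w}) + 1 = card (nb E y)\<close> by simp
    qed
  qed
  have dO: "\<And>t. t \<notin> {w, c, v, u} \<Longrightarrow> deg E' t = deg E t"
    using dM' NO unfolding deg_nb by metis
  have nbV: "\<And>t. nb E t \<subseteq> V" using tree_nb_sub[OF tree] .
  have cV: "c \<in> V" using nbV Nw cCh4 Ch by blast
  have vV: "v \<in> V" using nbV vnc by blast
  have uV: "u \<in> V" using nbV Nv by blast
  have MV: "M \<subseteq> V" using nbV Mw by blast
  have RE: "R \<subseteq> E"
  proof -
    have "{c, v} \<in> E" using vnc unfolding nb_def by simp
    moreover have "{v, u} \<in> E" using Nv unfolding nb_def by auto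
    moreover have "\<forall>y\<in>M. {w, y} \<in> E" using Mw unfolding nb_def by auto
    ultimately show ?thesis unfolding R_def by auto
  qed
  have AE: "A \<inter> E = {}"
  proof -
    have "{w, v} \<notin> E" "{w, u} \<notin> E" using vnw unfolding nb_def by auto
    moreover have "\<forall>y\<in>M1. {v, y} \<notin> E"
    proof
      fix y assume "y \<in> M1"
      then have "y \<in> M" using M12 by auto
      then have "v \<notin> nb E y" using vMy by auto
      then show "{v, y} \<notin> E" unfolding nb_def by (simp add: insert_commute)
    qed
    moreover have "\<forall>y\<in>M2. {u, y} \<notin> E"
    proof
      fix y assume "y \<in> M2"
      then have "y \<in> M" using M12 by auto
      then have "u \<notin> nb E y" using vMy by auto
      then show "{u, y} \<notin> E" unfolding nb_def by (simp add: insert_commute)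
    qed
    ultimately show ?thesis unfolding A_def by auto
  qed
  have cardR: "card R = 110"
  proof -
    have "card ((\<lambda>y. {w, y}) ` M) = 108" using cardM by (simp add: card_image inj_pair)
    moreover have "{c, v} \<notin> (\<lambda>y. {w, y}) ` M" "{v, u} \<notin> (\<lambda>y. {w, y}) ` M"
      using ne by (auto simp: pair_img)
    moreover have "{c, v} \<noteq> {v, u}" using ne by (auto simp: doubleton_eq_iff)
    moreover have "finite ((\<lambda>y. {w, y}) ` M)" using finM by simp
    ultimately show ?thesis unfolding R_def by simp
  qed
  have cardA: "card A = 110"
  proof -
    have c1: "card ((\<lambda>y. {v, y}) ` M1) = 54" using M by (simp add: card_image inj_pair)
    have c2: "card ((\<lambda>y. {u, y}) ` M2) = 54" using M by (simp add: card_image inj_pair)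
    have vM: "v \<notin> M1" "v \<notin> M2" "u \<notin> M1" "u \<notin> M2" using nM M12 by auto
    have d: "(\<lambda>y. {v, y}) ` M1 \<inter> (\<lambda>y. {u, y}) ` M2 = {}"
      using vM ne by (auto simp: doubleton_eq_iff)
    have "card ((\<lambda>y. {v, y}) ` M1 \<union> (\<lambda>y. {u, y}) ` M2) = 108"
      using c1 c2 d finM by (simp add: card_Un_disjoint)
    moreover have "{w, v} \<notin> (\<lambda>y. {v, y}) ` M1 \<union> (\<lambda>y. {u, y}) ` M2"
      "{w, u} \<notin> (\<lambda>y. {v, y}) ` M1 \<union> (\<lambda>y. {u, y}) ` M2"
      using ne wM12 by (auto simp: pair_img)
    moreover have "{w, v} \<noteq> {w, u}" using ne by (auto simp: doubleton_eq_iff)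
    moreover have "finite ((\<lambda>y. {v, y}) ` M1 \<union> (\<lambda>y. {u, y}) ` M2)" using finM by simp
    ultimately show ?thesis unfolding A_def by (simp add: Un_assoc)
  qed
  have finR: "finite R" using RE finE finite_subset by auto
  have finA: "finite A" unfolding A_def using finM by simp
  have cardE': "card E' = card E"
  proof -
    have "card (E - R) = card E - 110" using RE finR cardR by (simp add: card_Diff_subset)
    moreover have "card R \<le> card E" using RE finE by (simp add: card_mono)
    moreover have "(E - R) \<inter> A = {}" using AE by auto
    ultimately show ?thesis unfolding E'_def using finE finA cardA cardR
      by (simp add: card_Un_disjoint)
  qed
  have edges': "\<forall>e\<in>E'. \<exists>a b. e = {a, b} \<and> a \<in> V \<and> b \<in> V \<and> a \<noteq> b"
  proof
    fix e assume e: "e \<in> E'"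
    show "\<exists>a b. e = {a, b} \<and> a \<in> V \<and> b \<in> V \<and> a \<noteq> b"
    proof (cases "e \<in> E")
      case True
      then show ?thesis using tree unfolding is_tree_def by blast
    next
      case False
      then have "e \<in> A" using e unfolding E'_def by auto
      then show ?thesis unfolding A_def using wV vV uV MV M12 ne nM by blast
    qed
  qed
  have conn: "\<forall>a\<in>V. \<forall>b\<in>V. (a, b) \<in> (adj_rel E')\<^sup>*"
  proof -
    let ?C = "\<lambda>a. (a, w) \<in> (adj_rel E')\<^sup>* \<and> (w, a) \<in> (adj_rel E')\<^sup>*"
    have e2: "\<And>a b. {a, b} \<in> E' \<Longrightarrow> (a, b) \<in> (adj_rel E')\<^sup>* \<and> (b, a) \<in> (adj_rel E')\<^sup>*"
      using adj_edge by (metis insert_commute)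
    have Cw: "?C w" by simp
    have Cv: "?C v" using e2[of w v] unfolding E'_def A_def by auto
    have Cu: "?C u" using e2[of w u] unfolding E'_def A_def by auto
    have Cc: "?C c"
    proof -
      have "{w, c} \<in> E" using cCh4 Ch Nw unfolding nb_def by auto
      moreover have "{w, c} \<notin> R" using ne nM unfolding R_def by (auto simp: doubleton_eq_iff pair_img)
      ultimately show ?thesis using e2[of w c] unfolding E'_def by auto
    qed
    have CM: "\<And>y. y \<in> M \<Longrightarrow> ?C y"
    proof -
      fix y assume y: "y \<in> M"
      show "?C y"
      proof (cases "y \<in> M1")
        case True
        then have "{v, y} \<in> E'" unfolding E'_def A_def by auto
        then show ?thesis using e2 Cv by (meson rtrancl_trans)
      next
        case False
        then have "y \<in> M2" using y unfolding M_def by auto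
        then have "{u, y} \<in> E'" unfolding E'_def A_def by auto
        then show ?thesis using e2 Cu by (meson rtrancl_trans)
      qed
    qed
    have sub: "adj_rel E \<subseteq> (adj_rel E')\<^sup>*"
    proof
      fix q assume "q \<in> adj_rel E"
      then obtain a b where q: "q = (a, b)" "{a, b} \<in> E" unfolding adj_rel_def by auto
      show "q \<in> (adj_rel E')\<^sup>*"
      proof (cases "{a, b} \<in> R")
        case False
        then have "{a, b} \<in> E'" using q unfolding E'_def by auto
        then show ?thesis using q adj_edge by auto
      next
        case True
        then have "a \<in> {c, v, u, w} \<union> M \<and> b \<in> {c, v, u, w} \<union> M"
          unfolding R_def by (auto simp: doubleton_eq_iff)
        then have "?C a" "?C b" using Cw Cv Cu Cc CM by auto
        then show ?thesis using q by (meson rtrancl_trans)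
      qed
    qed
    have "(adj_rel E)\<^sup>* \<subseteq> (adj_rel E')\<^sup>*" using sub by (rule rtrancl_subset_rtrancl)
    then show ?thesis using tree unfolding is_tree_def by blast
  qed
  have treeE': "is_tree V E'"
    using tree edges' conn cardE' unfolding is_tree_def by simp
  define W where "W = (\<lambda>s. {w, s}) ` (nb E w - M)"
  have WER: "W \<subseteq> E - R"
  proof
    fix e assume "e \<in> W"
    then obtain s where s: "e = {w, s}" "s \<in> nb E w" "s \<notin> M" unfolding W_def by auto
    have "{w, s} \<in> E" using s unfolding nb_def by simp
    moreover have "{w, s} \<notin> R" using s ne unfolding R_def by (auto simp: doubleton_eq_iff pair_img)
    ultimately show "e \<in> E - R" using s by simp
  qed
  have zero: "\<And>e. e \<in> (E - R) - W \<Longrightarrow> ew E e - ew E' e = 0"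
  proof -
    fix e assume e: "e \<in> (E - R) - W"
    then obtain a b where ab: "e = {a, b}" "a \<in> V" "b \<in> V" "a \<noteq> b"
      using tree unfolding is_tree_def by blast
    have eE: "{a, b} \<in> E" "{a, b} \<notin> R" "{a, b} \<notin> W" using e ab by auto
    have aw: "a \<noteq> w"
    proof
      assume "a = w"
      then have "b \<in> nb E w" using eE unfolding nb_def by simp
      moreover have "b \<notin> M" using eE \<open>a = w\<close> unfolding R_def by auto
      ultimately show False using eE \<open>a = w\<close> unfolding W_def by auto
    qed
    have bw: "b \<noteq> w"
    proof
      assume "b = w"
      then have "a \<in> nb E w" using eE unfolding nb_def by (simp add: insert_commute)
      moreover have "a \<notin> M" using eE \<open>b = w\<close> unfolding R_def by (auto simp: insert_commute)
      ultimately show False using eE \<open>b = w\<close> unfolding W_def by (auto simp: insert_commute)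
    qed
    have RR: "{c, v} \<in> R" "{v, u} \<in> R" unfolding R_def by auto
    have av: "a \<noteq> v \<and> b \<noteq> v"
    proof (rule ccontr)
      assume "\<not> (a \<noteq> v \<and> b \<noteq> v)"
      then consider "a = v" | "b = v" by blast
      then show False
      proof cases
        case 1
        then have "b \<in> nb E v" using eE unfolding nb_def by simp
        then have "b = c \<or> b = u" using Nv by simp
        then show False using 1 eE RR by (auto simp: insert_commute)
      next
        case 2
        then have "a \<in> nb E v" using eE unfolding nb_def by (simp add: insert_commute)
        then have "a = c \<or> a = u" using Nv by simp
        then show False using 2 eE RR by (auto simp: insert_commute)
      qed
    qed
    have au: "a \<noteq> u \<and> b \<noteq> u"
    proof (rule ccontr)
      assume "\<not> (a \<noteq> u \<and> b \<noteq> u)"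
      then consider "a = u" | "b = u" by blast
      then show False
      proof cases
        case 1
        then have "b \<in> nb E u" using eE unfolding nb_def by simp
        then have "b = v" using Nu by simp
        then show False using 1 eE RR by (auto simp: insert_commute)
      next
        case 2
        then have "a \<in> nb E u" using eE unfolding nb_def by (simp add: insert_commute)
        then have "a = v" using Nu by simp
        then show False using 2 eE RR by (auto simp: insert_commute)
      qed
    qed
    have cc: "\<And>t. {c, t} \<in> E \<Longrightarrow> t \<noteq> w \<Longrightarrow> t \<noteq> v \<Longrightarrow> ew E {c, t} = ew E' {c, t}"
    proof -
      fix t assume t: "{c, t} \<in> E" "t \<noteq> w" "t \<noteq> v"
      then have "t \<in> Cc" using Nc unfolding nb_def by auto
      then have dt: "deg E t = 2" using dCc by auto
      have "t \<noteq> c" "t \<noteq> u" using dt dc du by auto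
      then have dt': "deg E' t = 2" using dO[of t] t dt by auto
      have "ew E {c, t} = sqrt (1/2)" using dt dc \<open>t \<noteq> c\<close> by (simp add: ew_pair fw_def)
      moreover have "ew E' {c, t} = sqrt (1/2)" using dt' dC' \<open>t \<noteq> c\<close> by (simp add: ew_pair fw_def)
      ultimately show "ew E {c, t} = ew E' {c, t}" by simp
    qed
    show "ew E e - ew E' e = 0"
    proof (cases "a = c \<or> b = c")
      case True
      then show ?thesis
      proof
        assume "a = c" then show ?thesis using cc[of b] eE ab bw av by simp
      next
        assume "b = c" then show ?thesis using cc[of a] eE ab aw av by (simp add: insert_commute)
      qed
    next
      case False
      then have "deg E' a = deg E a" "deg E' b = deg E b" using dO aw bw av au by auto
      then show ?thesis using ab by (simp add: ew_pair)
    qed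
  qed
  have finER: "finite (E - R)" using finE by simp
  have S1: "ABC E = sum (ew E) (E - R) + sum (ew E) R"
    unfolding ABC_ew using sum.subset_diff[OF RE finE] .
  have S2: "ABC E' = sum (ew E') (E - R) + sum (ew E') A"
  proof -
    have "(E - R) \<inter> A = {}" using AE by auto
    then show ?thesis unfolding ABC_ew E'_def using finER finA by (simp add: sum.union_disjoint)
  qed
  have S3: "sum (ew E) (E - R) - sum (ew E') (E - R) = sum (\<lambda>e. ew E e - ew E' e) W"
  proof -
    have "sum (ew E) (E - R) - sum (ew E') (E - R) = sum (\<lambda>e. ew E e - ew E' e) (E - R)"
      by (simp add: sum_subtractf)
    also have "\<dots> = sum (\<lambda>e. ew E e - ew E' e) W"
      using finER WER zero by (intro sum.mono_neutral_right) auto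
    finally show ?thesis .
  qed
  define g where "g = (\<lambda>s. ew E {w, s} - ew E' {w, s})"
  have S4: "sum (\<lambda>e. ew E e - ew E' e) W = sum g (nb E w - M)"
    unfolding W_def g_def by (simp add: sum.reindex[OF inj_pair])
  have decomp: "nb E w - M = insert p (insert c ((Ch3 - M) \<union> (Ch4 - {c})))"
    using Nw Ch cCh4 pne nM MCh M unfolding M_def by auto
  have pn: "p \<notin> insert c ((Ch3 - M) \<union> (Ch4 - {c}))" using pne pCh Ch by auto
  have cn: "c \<notin> (Ch3 - M) \<union> (Ch4 - {c})" using cCh4 Ch by auto
  have dj: "(Ch3 - M) \<inter> (Ch4 - {c}) = {}" using Ch by auto
  define Z where "Z = real z"
  have rW: "real (deg E w) = Z + 1" unfolding Z_def dw by simp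
  have rW': "real (deg E' w) = Z - 105" unfolding Z_def dW' using z by (simp add: of_nat_diff)
  have g3: "\<And>s. s \<in> Ch3 - M \<Longrightarrow> g s = fw (Z + 1) 4 - fw (Z - 105) 4"
  proof -
    fix s assume s: "s \<in> Ch3 - M"
    then have ds: "deg E s = 4" using d3 by auto
    have "s \<noteq> c" using s cCh4 Ch by auto
    moreover have "s \<noteq> w" "s \<noteq> v" "s \<noteq> u" using ds dw dv du z by auto
    ultimately have "deg E' s = 4" using dO[of s] ds by auto
    then show "g s = fw (Z + 1) 4 - fw (Z - 105) 4"
      unfolding g_def using ds \<open>s \<noteq> w\<close> rW rW' by (simp add: ew_pair)
  qed
  have g4: "\<And>s. s \<in> Ch4 - {c} \<Longrightarrow> g s = fw (Z + 1) 5 - fw (Z - 105) 5"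
  proof -
    fix s assume s: "s \<in> Ch4 - {c}"
    then have ds: "deg E s = 5" using d4 by auto
    have "s \<noteq> c" using s by auto
    moreover have "s \<noteq> w" "s \<noteq> v" "s \<noteq> u" using ds dw dv du z by auto
    ultimately have "deg E' s = 5" using dO[of s] ds by auto
    then show "g s = fw (Z + 1) 5 - fw (Z - 105) 5"
      unfolding g_def using ds \<open>s \<noteq> w\<close> rW rW' by (simp add: ew_pair)
  qed
  have gc: "g c = fw (Z + 1) 5 - fw (Z - 105) 4"
    unfolding g_def using dc dC' ne rW rW' by (simp add: ew_pair)
  define bb where "bb = real (deg E p)"
  have gp: "g p = fw (Z + 1) bb - fw (Z - 105) bb"
  proof -
    have "deg E' p = deg E p" using dO[of p] pne by auto
    then show ?thesis unfolding g_def bb_def using pne rW rW' by (simp add: ew_pair)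
  qed
  have bb1: "bb \<ge> 1"
  proof -
    have "w \<in> nb E p" using pw nb_sym by metis
    then have "nb E p \<noteq> {}" by auto
    then have "card (nb E p) \<ge> 1" using finN by (simp add: Suc_le_eq card_gt_0_iff)
    then show ?thesis unfolding bb_def deg_nb by simp
  qed
  have c3: "card (Ch3 - M) = z - x - 108" using Ch M MCh finM cardM
    by (metis card_Diff_subset diff_diff_left M_def Un_subset_iff)
  have c4: "card (Ch4 - {c}) = x - 1" using Ch cCh4 by simp
  have S5: "sum g (nb E w - M) = real (z - x - 108) * (fw (Z + 1) 4 - fw (Z - 105) 4)
       + real (x - 1) * (fw (Z + 1) 5 - fw (Z - 105) 5) + (fw (Z + 1) 5 - fw (Z - 105) 4)
       + (fw (Z + 1) bb - fw (Z - 105) bb)"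
  proof -
    have f1: "finite (Ch3 - M)" "finite (Ch4 - {c})" using fin3 by auto
    have "sum g (nb E w - M) = g p + (g c + (sum g (Ch3 - M) + sum g (Ch4 - {c})))"
    proof -
      have fX: "finite ((Ch3 - M) \<union> (Ch4 - {c}))" using f1 by simp
      have "sum g (insert p (insert c ((Ch3 - M) \<union> (Ch4 - {c}))))
          = g p + sum g (insert c ((Ch3 - M) \<union> (Ch4 - {c})))"
        using fX pn by (intro sum.insert) auto
      also have "sum g (insert c ((Ch3 - M) \<union> (Ch4 - {c}))) = g c + sum g ((Ch3 - M) \<union> (Ch4 - {c}))"
        using fX cn by (intro sum.insert) auto
      also have "sum g ((Ch3 - M) \<union> (Ch4 - {c})) = sum g (Ch3 - M) + sum g (Ch4 - {c})"
        using f1 dj by (intro sum.union_disjoint) auto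
      finally show ?thesis unfolding decomp .
    qed
    also have "sum g (Ch3 - M) = real (z - x - 108) * (fw (Z + 1) 4 - fw (Z - 105) 4)"
      using g3 c3 by simp
    also have "sum g (Ch4 - {c}) = real (x - 1) * (fw (Z + 1) 5 - fw (Z - 105) 5)"
      using g4 c4 by simp
    finally show ?thesis using gc gp by simp
  qed
  have imgM: "(\<lambda>y. {w, y}) ` M \<inter> {{c, v}, {v, u}} = {}" using ne by (auto simp: doubleton_eq_iff)
  have SR: "sum (ew E) R = 2 * sqrt (1/2) + 108 * fw (Z + 1) 4"
  proof -
    have fI: "finite ((\<lambda>y. {w, y}) ` M)" using finM by simp
    have "sum (ew E) R = ew E {c, v} + (ew E {v, u} + sum (ew E) ((\<lambda>y. {w, y}) ` M))"
    proof -
      have "R = insert {c, v} (insert {v, u} ((\<lambda>y. {w, y}) ` M))" unfolding R_def by auto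
      moreover have "{c, v} \<notin> insert {v, u} ((\<lambda>y. {w, y}) ` M)"
        using imgM ne by (auto simp: doubleton_eq_iff)
      moreover have "{v, u} \<notin> (\<lambda>y. {w, y}) ` M" using imgM by auto
      ultimately show ?thesis using fI by simp
    qed
    also have "ew E {c, v} = sqrt (1/2)" using dc dv ne by (simp add: ew_pair fw_def)
    also have "ew E {v, u} = sqrt (1/2)" using du dv ne by (simp add: ew_pair fw_def)
    also have "sum (ew E) ((\<lambda>y. {w, y}) ` M) = sum (\<lambda>y. ew E {w, y}) M"
      by (simp add: sum.reindex[OF inj_pair])
    also have "\<dots> = sum (\<lambda>y. fw (Z + 1) 4) M"
    proof (rule sum.cong)
      fix y assume "y \<in> M"
      then have "deg E y = 4" "y \<noteq> w" using dM nM by auto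
      then show "ew E {w, y} = fw (Z + 1) 4" using rW by (simp add: ew_pair)
    qed simp
    also have "\<dots> = 108 * fw (Z + 1) 4" using cardM by simp
    finally show ?thesis by simp
  qed
  have SA: "sum (ew E') A = 2 * fw (Z - 105) 55 + 108 * fw 55 4"
  proof -
    define I1 where "I1 = (\<lambda>y. {v, y}) ` M1"
    define I2 where "I2 = (\<lambda>y. {u, y}) ` M2"
    have fI: "finite I1" "finite I2" unfolding I1_def I2_def using finM by auto
    have vM: "v \<notin> M1" "v \<notin> M2" "u \<notin> M1" "u \<notin> M2" using nM M12 by auto
    have d: "I1 \<inter> I2 = {}" unfolding I1_def I2_def using vM ne by (auto simp: doubleton_eq_iff)
    have n0: "{w, v} \<noteq> {w, u}" using ne by (auto simp: doubleton_eq_iff)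
    have n2: "{w, u} \<notin> I1 \<union> I2" "{w, v} \<notin> I1 \<union> I2" unfolding I1_def I2_def
      using ne wM12 by (auto simp: pair_img)
    have n1: "{w, v} \<notin> insert {w, u} (I1 \<union> I2)" using n0 n2 by auto
    have "A = insert {w, v} (insert {w, u} (I1 \<union> I2))" unfolding A_def I1_def I2_def by auto
    then have "sum (ew E') A = ew E' {w, v} + (ew E' {w, u} + (sum (ew E') I1 + sum (ew E') I2))"
      using fI n1 n2 d by (simp add: sum.union_disjoint)
    also have "ew E' {w, v} = fw (Z - 105) 55" using dV' rW' ne by (simp add: ew_pair)
    also have "ew E' {w, u} = fw (Z - 105) 55" using dU' rW' ne by (simp add: ew_pair)
    also have "sum (ew E') I1 = 54 * fw 55 4"
    proof -
      have "sum (ew E') I1 = sum (\<lambda>y. ew E' {v, y}) M1"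
        unfolding I1_def by (simp add: sum.reindex[OF inj_pair])
      also have "\<dots> = sum (\<lambda>y. fw 55 4) M1"
      proof (rule sum.cong)
        fix y assume y: "y \<in> M1"
        then have "y \<in> M" using M12 by auto
        then have "deg E' y = 4" "y \<noteq> v" using dM dM' nM by auto
        then show "ew E' {v, y} = fw 55 4" using dV' by (simp add: ew_pair)
      qed simp
      finally show ?thesis using M by simp
    qed
    also have "sum (ew E') I2 = 54 * fw 55 4"
    proof -
      have "sum (ew E') I2 = sum (\<lambda>y. ew E' {u, y}) M2"
        unfolding I2_def by (simp add: sum.reindex[OF inj_pair])
      also have "\<dots> = sum (\<lambda>y. fw 55 4) M2"
      proof (rule sum.cong)
        fix y assume y: "y \<in> M2"
        then have "y \<in> M" using M12 by auto
        then have "deg E' y = 4" "y \<noteq> u" using dM dM' nM by auto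
        then show "ew E' {u, y} = fw 55 4" using dU' by (simp add: ew_pair)
      qed simp
      finally show ?thesis using M by simp
    qed
    finally show ?thesis by simp
  qed
  have num: "(Z - real x - 108) * (fw (Z + 1) 4 - fw (Z - 105) 4) + (real x - 1) * (fw (Z + 1) 5 - fw (Z - 105) 5)
     + (fw (Z + 1) 5 - fw (Z - 105) 4) + (fw (Z + 1) bb - fw (Z - 105) bb) + 2*sqrt(1/2)
     + 108*fw (Z + 1) 4 - 2*fw (Z - 105) 55 - 108*fw 55 4 > 0"
    using numeric[of Z "real x" bb] z bb1 unfolding Z_def by simp
  have rz: "real (z - x - 108) = Z - real x - 108" "real (x - 1) = real x - 1"
    unfolding Z_def using z by (simp_all add: of_nat_diff)
  have "ABC E - ABC E' > 0"
    using S1 S2 S3 S4 S5 SR SA num unfolding rz by linarith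
  then show ?thesis using treeE' by auto
qed

lemma card_eq_sub: "finite B \<Longrightarrow> A \<subseteq> B \<Longrightarrow> card A = card B \<Longrightarrow> A = B"
  by (simp add: card_subset_eq)

theorem lemma6:
  fixes V :: "nat set" and E :: "nat set set" and r :: nat and x z :: nat
  assumes "minimal_ABC V E"
    and "is_root V E r"
    and "x \<in> {1, 2, 3, 4}"
    and "z \<ge> 216"
  shows "\<not> (\<exists>w\<in>V. is_D4_branch E r z x w)"
proof
  assume "\<exists>w\<in>V. is_D4_branch E r z x w"
  then obtain w where wV: "w \<in> V" and D: "is_D4_branch E r z x w" by blast
  have tree: "is_tree V E" using assms(1) unfolding minimal_ABC_def by simp
  have x: "1 \<le> x" "x \<le> 4" using assms(3) by auto
  have z: "z \<ge> 216" using assms(4) .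
  have finN: "\<And>t. finite (nb E t)" using tree_nb_fin[OF tree] .
  define Ch where "Ch = children E r w"
  define Ch3 where "Ch3 = {v \<in> Ch. is_B_branch E r 3 v}"
  define Ch4 where "Ch4 = {v \<in> Ch. is_B_branch E r 4 v}"
  have dw: "deg E w = z + 1" and cardCh: "card Ch = z"
    and allB: "\<forall>v\<in>Ch. is_B_branch E r 3 v \<or> is_B_branch E r 4 v"
    and c3: "card Ch3 = z - x" and c4: "card Ch4 = x"
    using D unfolding is_D4_branch_def Ch_def Ch3_def Ch4_def by auto
  have ChN: "Ch \<subseteq> nb E w" unfolding Ch_def children_def child_def nb_def by auto
  have d3: "\<forall>y\<in>Ch3. deg E y = 4" unfolding Ch3_def is_B_branch_def by auto
  have d4: "\<forall>y\<in>Ch4. deg E y = 5" unfolding Ch4_def is_B_branch_def by auto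
  have ChU: "Ch = Ch3 \<union> Ch4" using allB unfolding Ch3_def Ch4_def by auto
  have ChI: "Ch3 \<inter> Ch4 = {}" using d3 d4 by fastforce
  have finCh: "finite Ch" using ChN finN finite_subset by blast
  have "card (nb E w - Ch) = 1" using ChN finCh cardCh dw unfolding deg_nb
    by (simp add: card_Diff_subset)
  then obtain p where p: "nb E w - Ch = {p}" by (meson card_1_singletonE)
  have Nw: "nb E w = Ch \<union> {p}" using p ChN by blast
  have pCh: "p \<notin> Ch" using p by blast
  have "Ch4 \<noteq> {}" using c4 x by auto
  then obtain c where cCh4: "c \<in> Ch4" by blast
  have fin3: "finite Ch3" using finCh unfolding Ch3_def by simp
  have "54 \<le> card Ch3" using c3 x z by simp
  then obtain M1 where M1: "M1 \<subseteq> Ch3" "card M1 = 54"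
    using obtain_subset_with_card_n[of 54 Ch3] by metis
  have "card (Ch3 - M1) \<ge> 54" using M1 c3 x z fin3
    by (simp add: card_Diff_subset finite_subset)
  then obtain M2 where M2: "M2 \<subseteq> Ch3 - M1" "card M2 = 54"
    using obtain_subset_with_card_n[of 54 "Ch3 - M1"] by metis
  define Cc where "Cc = children E r c"
  have cB: "is_B_branch E r 4 c" using cCh4 unfolding Ch4_def by simp
  have dc: "deg E c = 5" and cCc: "card Cc = 4"
    and Cc2: "\<forall>t\<in>Cc. deg E t = 2 \<and> card (children E r t) = 1 \<and> (\<forall>u\<in>children E r t. deg E u = 1)"
    using cB unfolding is_B_branch_def Cc_def by auto
  have CcN: "Cc \<subseteq> nb E c" unfolding Cc_def children_def child_def nb_def by auto
  have cw: "w \<in> nb E c"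
  proof -
    have "c \<in> nb E w" using cCh4 ChU ChN by auto
    then show ?thesis using nb_sym by metis
  qed
  have wCc: "w \<notin> Cc" using Cc2 dw z by auto
  have Nc: "nb E c = Cc \<union> {w}"
  proof (rule sym, rule card_eq_sub)
    show "finite (nb E c)" using finN .
    show "Cc \<union> {w} \<subseteq> nb E c" using CcN cw by auto
    have "finite Cc" using CcN finN finite_subset by blast
    then show "card (Cc \<union> {w}) = card (nb E c)" using wCc cCc dc unfolding deg_nb by simp
  qed
  have dCc: "\<forall>t\<in>Cc. deg E t = 2" using Cc2 by auto
  have "Cc \<noteq> {}" using cCc by auto
  then obtain v where vCc: "v \<in> Cc" by blast
  have "card (children E r v) = 1" using Cc2 vCc by auto
  then obtain u where u: "children E r v = {u}" by (meson card_1_singletonE)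
  have du: "deg E u = 1" using Cc2 vCc u by auto
  have dv: "deg E v = 2" using dCc vCc by auto
  have uv: "u \<in> nb E v" using u unfolding children_def child_def nb_def by auto
  have cv: "c \<in> nb E v"
  proof -
    have "v \<in> nb E c" using vCc CcN by auto
    then show ?thesis using nb_sym by metis
  qed
  have Nv: "nb E v = {c, u}"
  proof (rule sym, rule card_eq_sub)
    show "finite (nb E v)" using finN .
    show "{c, u} \<subseteq> nb E v" using uv cv by auto
    have "c \<noteq> u" using dc du by auto
    then show "card {c, u} = card (nb E v)" using dv unfolding deg_nb by simp
  qed
  have Nu: "nb E u = {v}"
  proof (rule sym, rule card_eq_sub)
    show "finite (nb E u)" using finN .
    have "v \<in> nb E u" using uv nb_sym by metis
    then show "{v} \<subseteq> nb E u" by simp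
    show "card {v} = card (nb E u)" using du unfolding deg_nb by auto
  qed
  obtain E' where E': "is_tree V E'" "ABC E' < ABC E"
    using transform[OF tree wV Nw pCh ChU ChI c3 c4 d3 d4 cCh4, of M1 M2 Cc v u]
      M1 M2 Nc dCc vCc Nv Nu z x by auto
  then show False using assms(1) unfolding minimal_ABC_def by fastforce
qed

end
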